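(* Let $\mathcal A\in\mathbb C^{n_1\times n_2\times n_3}$ and $\mathcal A^-\in\mathcal A\{1\}$. Then $\mathcal X=\mathcal A^{-,*}=\mathcal A^-\mathcal A\mathcal A^*$ is the unique $\mathcal X\in\mathbb C^{n_2\times n_1\times n_3}$ satisfying $$\mathcal X(\mathcal A^\dagger)^*\mathcal X=\mathcal X,\qquad \mathcal A\mathcal X=\mathcal A\mathcal A^*,\qquad \mathcal X(\mathcal A^\dagger)^*=\mathcal A^-\mathcal A.$$
   Context: Fix a nonsingular matrix $M\in\mathbb C^{n_3\times n_3}$. For $\mathcal C\in\mathbb C^{n_1\times n_2\times n_3}$ let $\widehat{\mathcal C}=\mathcal C\times_3M$, i.e. $\widehat{\mathcal C}_{ijk}=\sum_{l=1}^{n_3}M_{kl}\mathcal C_{ijl}$, and let $\widehat{\mathcal C}^{(i)}$ denote its $i$-th frontal slice. The M-product $\mathcal C\star_M\mathcal D$ of $\mathcal C\in\mathbb C^{n_1\times n_2\times n_3}$ and $\mathcal D\in\mathbb C^{n_2\times l\times n_3}$ is the unique tensor with $\widehat{\mathcal C\star_M\mathcal D}^{(i)}=\widehat{\mathcal C}^{(i)}\widehat{\mathcal D}^{(i)}$ for all $i\in[n_3]$. Juxtaposition of tensors denotes the M-product. The conjugate transpose $\mathcal A^*$ is defined by $\widehat{\mathcal A^*}^{(i)}=(\widehat{\mathcal A}^{(i)})^*$. The Moore–Penrose inverse $\mathcal A^\dagger$ is the unique $\mathcal W$ satisfying $\mathcal A\mathcal W\mathcal A=\mathcal A$, $\mathcal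 W\mathcal A\mathcal W=\mathcal W$, $(\mathcal A\mathcal W)^*=\mathcal A\mathcal W$, $(\mathcal W\mathcal A)^*=\mathcal W\mathcal A$. $\mathcal A\{1\}$ is the set of all $\mathcal W$ with $\mathcal A\mathcal W\mathcal A=\mathcal A$. The 1-Star inverse associated with $\mathcal A^-$ is $\mathcal A^{-,*}=\mathcal A^-\mathcal A\mathcal A^*$. *)

theory Defs
  imports Complex_Main "Jordan_Normal_Form.Matrix"
begin

text \<open>The transform matrix M is an n3 x n3 complex matrix (n3 = dim_row M).\<close>

type_synonym tensor = "nat \<Rightarrow> nat \<Rightarrow> nat \<Rightarrow> complex"

definition tensors :: "nat \<Rightarrow> nat \<Rightarrow> nat \<Rightarrow> tensor set" where
  "tensors n1 n2 n3 = {C. \<forall>i j k. (n1 \<le> i \<or> n2 \<le> j \<or> n3 \<le> k) \<longrightarrow> C i j k = 0}"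

definition mhat :: "complex mat \<Rightarrow> tensor \<Rightarrow> tensor" where
  "mhat M C = (\<lambda>i j k. \<Sum>l<dim_col M. M $$ (k, l) * C i j l)"

definition mprod :: "complex mat \<Rightarrow> nat \<Rightarrow> nat \<Rightarrow> nat \<Rightarrow> tensor \<Rightarrow> tensor \<Rightarrow> tensor" where
  "mprod M n1 n2 l C D = (THE E. E \<in> tensors n1 l (dim_row M) \<and>
     (\<forall>i<n1. \<forall>j<l. \<forall>k<dim_row M.
        mhat M E i j k = (\<Sum>m<n2. mhat M C i m k * mhat M D m j k)))"

definition ctrans :: "complex mat \<Rightarrow> nat \<Rightarrow> nat \<Rightarrow> tensor \<Rightarrow> tensor" where
  "ctrans M n1 n2 A = (THE E. E \<in> tensors n2 n1 (dim_row M) \<and>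
     (\<forall>i<n2. \<forall>j<n1. \<forall>k<dim_row M. mhat M E i j k = cnj (mhat M A j i k)))"

definition mpinv :: "complex mat \<Rightarrow> nat \<Rightarrow> nat \<Rightarrow> tensor \<Rightarrow> tensor" where
  "mpinv M n1 n2 A = (THE W. W \<in> tensors n2 n1 (dim_row M) \<and>
     mprod M n1 n1 n2 (mprod M n1 n2 n1 A W) A = A \<and>
     mprod M n2 n2 n1 (mprod M n2 n1 n2 W A) W = W \<and>
     ctrans M n1 n1 (mprod M n1 n2 n1 A W) = mprod M n1 n2 n1 A W \<and>
     ctrans M n2 n2 (mprod M n2 n1 n2 W A) = mprod M n2 n1 n2 W A)"

definition inv1 :: "complex mat \<Rightarrow> nat \<Rightarrow> nat \<Rightarrow> tensor \<Rightarrow> tensor set" where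
  "inv1 M n1 n2 A = {W. W \<in> tensors n2 n1 (dim_row M) \<and>
     mprod M n1 n1 n2 (mprod M n1 n2 n1 A W) A = A}"

definition one_star :: "complex mat \<Rightarrow> nat \<Rightarrow> nat \<Rightarrow> tensor \<Rightarrow> tensor \<Rightarrow> tensor" where
  "one_star M n1 n2 A Am = mprod M n2 n2 n1 (mprod M n2 n1 n2 Am A) (ctrans M n1 n2 A)"

end

theory Submission
  imports Defs "Jordan_Normal_Form.Gauss_Jordan_Elimination"
begin


lemma ref_inv1:
  fixes R :: "'a::field mat"
  assumes R: "R \<in> carrier_mat nr nc" and pf: "pivot_fun R f nc"
  defines "G \<equiv> mat nc nr (\<lambda>(j,i). if f i < nc \<and> j = f i then 1 else 0)"
  shows "R * G * R = R"
proof -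
  have dR: "dim_row R = nr" "dim_col R = nc" using R by auto
  note pD = pivot_funD[OF dR(1) pf]
  have RG: "(R * G) $$ (k,i) = (if f i < nc \<and> k = i then 1 else 0)" if "k < nr" "i < nr" for k i
  proof -
    have "(R * G) $$ (k,i) = (\<Sum>j<nc. R $$ (k,j) * (if f i < nc \<and> j = f i then 1 else 0))"
      using that dR by (simp add: G_def scalar_prod_def lessThan_atLeast0)
    also have "\<dots> = (if f i < nc then R $$ (k, f i) else 0)"
      by (simp add: if_distrib[of "\<lambda>x. _ * x"] sum.delta cong: if_cong)
    also have "\<dots> = (if f i < nc \<and> k = i then 1 else 0)"
      using pD(4)[OF that(2)] pD(5)[OF that(2) _ that(1)] by auto
    finally show ?thesis .
  qed
  show ?thesis
  proof (rule eq_matI)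
    fix k l assume k: "k < dim_row R" and l: "l < dim_col R"
    have "(R * G * R) $$ (k,l) = (\<Sum>i<nr. (R*G) $$ (k,i) * R $$ (i,l))"
      using k l dR by (simp add: G_def scalar_prod_def lessThan_atLeast0)
    also have "\<dots> = (\<Sum>i<nr. (if k = i then (if f i < nc then R $$ (i,l) else 0) else 0))"
      using k dR by (intro sum.cong refl) (simp add: RG)
    also have "\<dots> = (if f k < nc then R $$ (k,l) else 0)"
      using k dR by simp
    also have "\<dots> = R $$ (k,l)"
      using pD(1)[of k] pD(2)[of k l] k l dR by auto
    finally show "(R * G * R) $$ (k,l) = R $$ (k,l)" .
  qed (use R in \<open>auto simp: G_def\<close>)
qed

lemma inv1_exists:
  fixes A :: "'a::field mat"
  assumes A: "A \<in> carrier_mat nr nc"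
  shows "\<exists>G \<in> carrier_mat nc nr. A * G * A = A"
proof -
  obtain R B' where res: "gauss_jordan A (0\<^sub>m nr 0) = (R, B')" by (cases "gauss_jordan A (0\<^sub>m nr 0)")
  from gauss_jordan_transform[OF A _ res, of 0 "()"] obtain P where
    P: "P \<in> Units (ring_mat TYPE('a) nr ())" and RP: "R = P * A" by auto
  from P obtain Q where Pc: "P \<in> carrier_mat nr nr" and Qc: "Q \<in> carrier_mat nr nr"
    and QP: "Q * P = 1\<^sub>m nr" and PQ: "P * Q = 1\<^sub>m nr"
    unfolding Units_def ring_mat_def by auto
  have Rc: "R \<in> carrier_mat nr nc" using RP Pc A by auto
  from gauss_jordan_row_echelon[OF A res] obtain f where pf: "pivot_fun R f (dim_col R)"
    unfolding row_echelon_form_def by auto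
  hence pf': "pivot_fun R f nc" using Rc by auto
  define G where "G = mat nc nr (\<lambda>(j,i). if f i < nc \<and> j = f i then 1 else (0::'a))"
  have Gc: "G \<in> carrier_mat nc nr" by (simp add: G_def)
  have RGR: "R * G * R = R" using ref_inv1[OF Rc pf'] unfolding G_def .
  have AQR: "A = Q * R"
    using RP QP Pc Qc A by (simp add: assoc_mult_mat[symmetric, of Q nr nr P nr A nc])
  have "A * (G * P) * A = Q * (R * G * R)"
    using AQR Gc Pc Qc Rc PQ
    by (smt (verit) assoc_mult_mat left_mult_one_mat mult_carrier_mat)
  also have "\<dots> = A" using RGR AQR by simp
  finally show ?thesis using Gc Pc by (intro bexI[of _ "G * P"]) auto
qed


definition adj :: "complex mat \<Rightarrow> complex mat" where
  "adj A = mat (dim_col A) (dim_row A) (\<lambda>(i,j). cnj (A $$ (j,i)))"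

lemma adj_dims[simp]: "dim_row (adj A) = dim_col A" "dim_col (adj A) = dim_row A"
  by (auto simp: adj_def)
lemma adj_index[simp]: "i < dim_col A \<Longrightarrow> j < dim_row A \<Longrightarrow> adj A $$ (i,j) = cnj (A $$ (j,i))"
  by (auto simp: adj_def)
lemma adj_carrier: "A \<in> carrier_mat a b \<Longrightarrow> adj A \<in> carrier_mat b a"
  by (intro carrier_matI) (auto dest: carrier_matD)
lemma adj_adj[simp]: "adj (adj A) = A"
  by (rule eq_matI) auto

lemma adj_mult: assumes "dim_col A = dim_row B" shows "adj (A * B) = adj B * adj A"
proof (rule eq_matI)
  fix i j assume i: "i < dim_row (adj B * adj A)" and j: "j < dim_col (adj B * adj A)"
  show "adj (A * B) $$ (i, j) = (adj B * adj A) $$ (i, j)"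
    using i j assms by (simp add: scalar_prod_def) (intro sum.cong refl; simp add: mult.commute)
qed auto

lemma adj_minus: assumes "A \<in> carrier_mat a b" "B \<in> carrier_mat a b"
  shows "adj (A - B) = adj A - adj B"
  using assms by (intro eq_matI) auto

lemma adj_one[simp]: "adj (1\<^sub>m n) = 1\<^sub>m n"
  by (intro eq_matI) auto

lemma adj_zero[simp]: "adj (0\<^sub>m a b) = 0\<^sub>m b a"
  by (intro eq_matI) auto

lemma adj_cancel:
  assumes B: "B \<in> carrier_mat r c" and z: "adj B * B = 0\<^sub>m c c"
  shows "B = 0\<^sub>m r c"
proof (rule eq_matI)
  fix i j assume i: "i < dim_row (0\<^sub>m r c)" and j: "j < dim_col (0\<^sub>m r c)"
  have "(adj B * B) $$ (j,j) = 0" using z i j by simp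
  hence "(\<Sum>k<r. cnj (B $$ (k,j)) * B $$ (k,j)) = 0"
    using B i j by (simp add: scalar_prod_def lessThan_atLeast0)
  hence "(\<Sum>k<r. complex_of_real ((cmod (B $$ (k,j)))\<^sup>2)) = 0"
    by (metis (no_types, lifting) complex_norm_square mult.commute sum.cong)
  hence "(\<Sum>k<r. (cmod (B $$ (k,j)))\<^sup>2) = 0"
    by (metis of_real_0 of_real_eq_iff of_real_sum)
  hence "\<forall>k\<in>{..<r}. (cmod (B $$ (k,j)))\<^sup>2 = 0"
    by (subst sum_nonneg_eq_0_iff[symmetric]) auto
  thus "B $$ (i, j) = 0\<^sub>m r c $$ (i, j)" using i j by auto
qed (use B in auto)



lemma assoc_dim:
  "dim_col A = dim_row B \<Longrightarrow> dim_col B = dim_row C \<Longrightarrow> (A * B) * C = A * (B * (C::'a::semiring_0 mat))"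
  by (rule assoc_mult_mat[of A "dim_row A" "dim_col A" B "dim_col B" C "dim_col C"]) auto

lemma minus_zero_eq:
  fixes A B :: "complex mat"
  assumes "A \<in> carrier_mat r c" "B \<in> carrier_mat r c" "A - B = 0\<^sub>m r c"
  shows "A = B"
proof (rule eq_matI)
  fix i j assume "i < dim_row B" "j < dim_col B"
  hence "(A - B) $$ (i,j) = 0" using assms by auto
  moreover have "(A - B) $$ (i,j) = A $$ (i,j) - B $$ (i,j)"
    using \<open>i < dim_row B\<close> \<open>j < dim_col B\<close> by simp
  ultimately show "A $$ (i,j) = B $$ (i,j)" by simp
qed (use assms in auto)

lemma key1:
  assumes A: "A \<in> carrier_mat n1 n2" and G: "G \<in> carrier_mat n2 n2"
    and H: "adj A * A * G * (adj A * A) = adj A * A"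
  shows "A * G * (adj A * A) = A"
proof -
  have Aa: "adj A \<in> carrier_mat n2 n1" using A by (rule adj_carrier)
  note d = carrier_matD[OF A] carrier_matD[OF G]
  define E where "E = A * G * (adj A * A) - A"
  have Ec: "E \<in> carrier_mat n1 n2" using A G unfolding E_def by (intro minus_carrier_mat)
  have "adj A * E = adj A * (A * G * (adj A * A)) - adj A * A"
    unfolding E_def using A G by (subst mult_minus_distrib_mat[of _ n2 n1 _ n2]) auto
  also have "adj A * (A * G * (adj A * A)) = adj A * A * G * (adj A * A)"
    using A G Aa by (simp add: assoc_dim d)
  moreover have HC: "adj A * A \<in> carrier_mat n2 n2" by (rule mult_carrier_mat[OF Aa A])
  ultimately have AE: "adj A * E = 0\<^sub>m n2 n2" using H by simp
  have E2: "E = A * (G * (adj A * A) - 1\<^sub>m n2)"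
  proof -
    have GH: "G * (adj A * A) \<in> carrier_mat n2 n2" using mult_carrier_mat[OF G HC] .
    have "A * (G * (adj A * A) - 1\<^sub>m n2) = A * (G * (adj A * A)) - A * 1\<^sub>m n2"
      by (rule mult_minus_distrib_mat[OF A GH one_carrier_mat])
    also have "\<dots> = A * G * (adj A * A) - A"
      using assoc_mult_mat[OF A G HC] A by simp
    finally show ?thesis unfolding E_def by simp
  qed
  have "adj E = adj (G * (adj A * A) - 1\<^sub>m n2) * adj A"
    using E2 A G by (simp add: adj_mult d)
  hence "adj E * E = adj (G * (adj A * A) - 1\<^sub>m n2) * (adj A * E)"
  proof -
    have X: "G * (adj A * A) - 1\<^sub>m n2 \<in> carrier_mat n2 n2"
      by (rule minus_carrier_mat) simp
    show ?thesis using \<open>adj E = _\<close> assoc_mult_mat[OF adj_carrier[OF X] Aa Ec] by simp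
  qed
  also have "\<dots> = 0\<^sub>m n2 n2" using AE G A by (simp add: d)
  finally have "E = 0\<^sub>m n1 n2" using adj_cancel[OF Ec] by simp
  moreover have "A * G * (adj A * A) \<in> carrier_mat n1 n2"
    using mult_carrier_mat[OF mult_carrier_mat[OF A G] HC] .
  ultimately show ?thesis using minus_zero_eq[OF _ A] unfolding E_def by blast
qed


lemma key2:
  assumes A: "A \<in> carrier_mat n1 n2" and G: "G \<in> carrier_mat n2 n2"
    and H: "adj A * A * G * (adj A * A) = adj A * A"
  shows "adj (A * G * adj A) = A * G * adj A"
proof -
  note d = carrier_matD[OF A] carrier_matD[OF G]
  have "adj (adj A * A * G * (adj A * A)) = adj (adj A * A)" using H by simp
  hence H': "adj A * A * adj G * (adj A * A) = adj A * A"
    using d by (simp add: adj_mult assoc_dim)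
  have e1: "A * adj G * (adj A * A) = A"
    by (rule key1[OF A adj_carrier[OF G] H'])
  have "adj (A * adj G * (adj A * A)) = adj A" using e1 by simp
  hence e2: "adj A * (A * (G * adj A)) = adj A"
    using d by (simp add: adj_mult assoc_dim)
  have e1': "A * (adj G * (adj A * A)) = A" using e1 d by (simp add: assoc_dim)
  have "adj (A * G * adj A) = A * (adj G * adj A)" using d by (simp add: adj_mult assoc_dim)
  also have "\<dots> = A * (adj G * (adj A * (A * (G * adj A))))" using e2 by simp
  also have "\<dots> = (A * (adj G * (adj A * A))) * (G * adj A)" using d by (simp add: assoc_dim)
  also have "\<dots> = A * G * adj A" using e1' d by (simp add: assoc_dim)
  finally show ?thesis .
qed


definition is_mp :: "complex mat \<Rightarrow> complex mat \<Rightarrow> bool" where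
  "is_mp A W \<longleftrightarrow> A * W * A = A \<and> W * A * W = W \<and> adj (A * W) = A * W \<and> adj (W * A) = W * A"

lemma mp_exists:
  assumes A: "A \<in> carrier_mat n1 n2"
  shows "\<exists>W \<in> carrier_mat n2 n1. is_mp A W"
proof -
  have Aa: "adj A \<in> carrier_mat n2 n1" using A by (rule adj_carrier)
  have HC: "adj A * A \<in> carrier_mat n2 n2" by (rule mult_carrier_mat[OF Aa A])
  have KC: "adj (adj A) * adj A \<in> carrier_mat n1 n1" using mult_carrier_mat[OF A Aa] by simp
  obtain G1 where G1: "G1 \<in> carrier_mat n2 n2" and h1: "adj A * A * G1 * (adj A * A) = adj A * A"
    using inv1_exists[OF HC] by auto
  obtain G2 where G2: "G2 \<in> carrier_mat n1 n1"
    and h2: "adj (adj A) * adj A * G2 * (adj (adj A) * adj A) = adj (adj A) * adj A"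
    using inv1_exists[OF KC] by blast
  note d = carrier_matD[OF A] carrier_matD[OF G1] carrier_matD[OF G2]
  have f1: "A * G1 * (adj A * A) = A" by (rule key1[OF A G1 h1])
  have f2: "adj (A * G1 * adj A) = A * G1 * adj A" by (rule key2[OF A G1 h1])
  have f3: "adj A * G2 * (A * adj A) = adj A" using key1[OF Aa G2 h2] by simp
  have f4: "adj (adj A * G2 * A) = adj A * G2 * A" using key2[OF Aa G2 h2] by simp
  have "adj (adj A * G2 * (A * adj A)) = A" using f3 by simp
  hence "A * adj A * adj G2 * A = A" using d by (simp add: adj_mult assoc_dim)
  moreover have "adj A * adj G2 * A = adj A * G2 * A" using f4 d by (simp add: adj_mult assoc_dim)
  ultimately have f5: "A * adj A * G2 * A = A" using d by (simp add: assoc_dim)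
  define W where "W = adj A * G2 * A * G1 * adj A"
  have Wc: "W \<in> carrier_mat n2 n1" unfolding W_def using mult_carrier_mat[OF mult_carrier_mat[OF mult_carrier_mat[OF mult_carrier_mat[OF Aa G2] A] G1] Aa] .
  have AW: "A * W = A * G1 * adj A"
  proof -
    have "A * W = (A * adj A * G2 * A) * (G1 * adj A)" using d by (simp add: W_def assoc_dim)
    also have "\<dots> = A * G1 * adj A" using f5 d by (simp add: assoc_dim)
    finally show ?thesis .
  qed
  have WA: "W * A = adj A * G2 * A"
  proof -
    have "W * A = (adj A * G2) * (A * G1 * (adj A * A))" using d by (simp add: W_def assoc_dim)
    also have "\<dots> = adj A * G2 * A" using f1 d by (simp add: assoc_dim)
    finally show ?thesis .
  qed
  have "A * W * A = A" using AW f1 d by (simp add: assoc_dim)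
  moreover have "W * A * W = W"
  proof -
    have "W * A * W = adj A * G2 * (A * adj A * G2 * A) * G1 * adj A"
      using WA d by (simp add: W_def assoc_dim)
    also have "\<dots> = W" using f5 d by (simp add: W_def assoc_dim)
    finally show ?thesis .
  qed
  moreover have "adj (A * W) = A * W" using AW f2 by simp
  moreover have "adj (W * A) = W * A" using WA f4 by simp
  ultimately show ?thesis using Wc unfolding is_mp_def by blast
qed


lemma mp_unique:
  assumes A: "A \<in> carrier_mat n1 n2" and W: "W \<in> carrier_mat n2 n1" and V: "V \<in> carrier_mat n2 n1"
    and mW: "is_mp A W" and mV: "is_mp A V"
  shows "W = V"
proof -
  note d = carrier_matD[OF A] carrier_matD[OF W] carrier_matD[OF V]
  from mW have w1: "A * W * A = A" and w2: "W * A * W = W" and w3: "adj (A * W) = A * W"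
    and w4: "adj (W * A) = W * A" unfolding is_mp_def by auto
  from mV have v1: "A * V * A = A" and v2: "V * A * V = V" and v3: "adj (A * V) = A * V"
    and v4: "adj (V * A) = V * A" unfolding is_mp_def by auto
  have hA: "adj W * adj A = A * W" using w3 d by (simp add: adj_mult)
  have hB: "adj A * adj W = W * A" using w4 d by (simp add: adj_mult)
  have hC: "adj V * adj A = A * V" using v3 d by (simp add: adj_mult)
  have hD: "adj A * adj V = V * A" using v4 d by (simp add: adj_mult)
  have aA: "adj A = adj A * adj V * adj A"
  proof -
    have "adj A = adj (A * V * A)" using v1 by simp
    thus ?thesis using d by (simp add: adj_mult assoc_dim)
  qed
  have aA': "adj A = adj A * adj W * adj A"
  proof -
    have "adj A = adj (A * W * A)" using w1 by simp
    thus ?thesis using d by (simp add: adj_mult assoc_dim)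
  qed
  have "W = W * (adj W * adj A)" using w2 hA d by (simp add: assoc_dim)
  also have "\<dots> = W * adj W * adj A" using d by (simp add: assoc_dim)
  also have "\<dots> = W * adj W * (adj A * adj V * adj A)" using aA by simp
  also have "\<dots> = W * (adj W * adj A) * (adj V * adj A)" using d by (simp add: assoc_dim)
  also have "\<dots> = W * (A * W) * (A * V)" using hA hC by simp
  also have "\<dots> = (W * A * W) * A * V" using d by (simp add: assoc_dim)
  also have "\<dots> = W * A * V" using w2 by simp
  finally have eW: "W = W * A * V" .
  have "V = (adj A * adj V) * V" using v2 hD d by (simp add: assoc_dim)
  also have "\<dots> = (adj A * adj W * adj A) * adj V * V" using aA' d by (simp add: assoc_dim)
  also have "\<dots> = (adj A * adj W) * (adj A * adj V) * V" using d by (simp add: assoc_dim)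
  also have "\<dots> = (W * A) * (V * A) * V" using hB hD by simp
  also have "\<dots> = W * A * (V * A * V)" using d by (simp add: assoc_dim)
  also have "\<dots> = W * A * V" using v2 by simp
  finally have eV: "V = W * A * V" .
  show ?thesis using eW eV by simp
qed


lemma mat_main:
  assumes A: "A \<in> carrier_mat n1 n2" and G: "G \<in> carrier_mat n2 n1" and g: "A * G * A = A"
    and W: "W \<in> carrier_mat n2 n1" and mW: "is_mp A W"
  shows "G * A * adj A * adj W * (G * A * adj A) = G * A * adj A"
    "A * (G * A * adj A) = A * adj A"
    "G * A * adj A * adj W = G * A"
    "\<And>X. X \<in> carrier_mat n2 n1 \<Longrightarrow> X * adj W * X = X \<Longrightarrow> A * X = A * adj A \<Longrightarrow> X * adj W = G * A
      \<Longrightarrow> X = G * A * adj A"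
proof -
  note d = carrier_matD[OF A] carrier_matD[OF G] carrier_matD[OF W]
  from mW have w1: "A * W * A = A" and w4: "adj (W * A) = W * A" unfolding is_mp_def by auto
  have c: "G * A * adj A * adj W = G * A"
  proof -
    have "G * A * adj A * adj W = G * A * adj (W * A)" using d by (simp add: adj_mult assoc_dim)
    also have "\<dots> = G * (A * W * A)" using w4 d by (simp add: assoc_dim)
    also have "\<dots> = G * A" using w1 by simp
    finally show ?thesis .
  qed
  show "G * A * adj A * adj W = G * A" by (rule c)
  show b: "A * (G * A * adj A) = A * adj A"
  proof -
    have "A * (G * A * adj A) = (A * G * A) * adj A" using d by (simp add: assoc_dim)
    thus ?thesis using g by simp
  qed
  show "G * A * adj A * adj W * (G * A * adj A) = G * A * adj A"
  proof -
    have "G * A * adj A * adj W * (G * A * adj A) = G * (A * (G * A * adj A))"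
      using c d by (simp add: assoc_dim)
    also have "\<dots> = G * A * adj A" using b d by (simp add: assoc_dim)
    finally show ?thesis .
  qed
  fix X assume X: "X \<in> carrier_mat n2 n1" and x1: "X * adj W * X = X" and x2: "A * X = A * adj A"
    and x3: "X * adj W = G * A"
  have "X = G * (A * X)" using x1 x3 carrier_matD[OF X] d by (simp add: assoc_dim)
  thus "X = G * A * adj A" using x2 d by (simp add: assoc_dim)
qed



lemma inv_obtain:
  assumes M: "M \<in> carrier_mat n n" and inv: "invertible_mat M"
  obtains B where "B \<in> carrier_mat n n" "M * B = 1\<^sub>m n" "B * M = 1\<^sub>m n"
proof -
  from inv obtain B where "inverts_mat M B" "inverts_mat B M" unfolding invertible_mat_def by auto
  hence 1: "M * B = 1\<^sub>m n" and 2: "B * M = 1\<^sub>m (dim_row B)" using M unfolding inverts_mat_def by auto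
  have "dim_col B = n" using 1 M by (metis index_mult_mat(3) index_one_mat(3))
  moreover have "dim_row B = n" using 2 M by (metis index_mult_mat(3) index_one_mat(3) carrier_matD(2))
  ultimately have B: "B \<in> carrier_mat n n" by auto
  show ?thesis using that[OF B 1] 2 B by auto
qed

lemma mhat_vec:
  assumes M: "M \<in> carrier_mat n3 n3" and k: "k < n3"
  shows "mhat M E i j k = (M *\<^sub>v vec n3 (\<lambda>l. E i j l)) $ k"
  using M k by (simp add: mhat_def scalar_prod_def lessThan_atLeast0)

lemma tensor_inj:
  assumes M: "M \<in> carrier_mat n3 n3" and inv: "invertible_mat M"
    and E: "E \<in> tensors a b n3" and F: "F \<in> tensors a b n3"
    and h: "\<And>i j k. i < a \<Longrightarrow> j < b \<Longrightarrow> k < n3 \<Longrightarrow> mhat M E i j k = mhat M F i j k"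
  shows "E = F"
proof (intro ext)
  fix i j l
  obtain B where B: "B \<in> carrier_mat n3 n3" "B * M = 1\<^sub>m n3" using inv_obtain[OF M inv] by blast
  show "E i j l = F i j l"
  proof (cases "i < a \<and> j < b \<and> l < n3")
    case True
    let ?v = "vec n3 (\<lambda>l. E i j l)" and ?w = "vec n3 (\<lambda>l. F i j l)"
    have "M *\<^sub>v ?v = M *\<^sub>v ?w"
    proof (rule eq_vecI)
      fix k assume "k < dim_vec (M *\<^sub>v ?w)"
      hence k: "k < n3" using M by simp
      show "(M *\<^sub>v ?v) $ k = (M *\<^sub>v ?w) $ k"
        using h[of i j k] True k mhat_vec[OF M k, of E i j] mhat_vec[OF M k, of F i j] by simp
    qed simp
    hence "B *\<^sub>v (M *\<^sub>v ?v) = B *\<^sub>v (M *\<^sub>v ?w)" by simp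
    hence "?v = ?w" using B M
      by (simp add: assoc_mult_mat_vec[symmetric, of B n3 n3 M])
    thus ?thesis using True by (metis index_vec)
  next
    case False
    thus ?thesis using E F unfolding tensors_def by auto
  qed
qed

lemma tensor_surj:
  assumes M: "M \<in> carrier_mat n3 n3" and inv: "invertible_mat M"
  shows "\<exists>E \<in> tensors a b n3. \<forall>i<a. \<forall>j<b. \<forall>k<n3. mhat M E i j k = S i j k"
proof -
  obtain B where B: "B \<in> carrier_mat n3 n3" "M * B = 1\<^sub>m n3" using inv_obtain[OF M inv] by blast
  define E where "E = (\<lambda>i j l. if i < a \<and> j < b \<and> l < n3 then (B *\<^sub>v vec n3 (\<lambda>k. S i j k)) $ l else 0)"
  have "E \<in> tensors a b n3" unfolding tensors_def E_def by auto
  moreover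
  { fix i j k assume ijk: "i < a" "j < b" "k < n3"
    have "vec n3 (\<lambda>l. E i j l) = B *\<^sub>v vec n3 (\<lambda>k. S i j k)"
      using ijk B by (intro eq_vecI) (auto simp: E_def)
    hence "mhat M E i j k = (M *\<^sub>v (B *\<^sub>v vec n3 (\<lambda>k. S i j k))) $ k"
      using mhat_vec[OF M ijk(3)] by simp
    also have "\<dots> = ((M * B) *\<^sub>v vec n3 (\<lambda>k. S i j k)) $ k"
      using M B by (subst assoc_mult_mat_vec) auto
    also have "\<dots> = S i j k" using B ijk by simp
    finally have "mhat M E i j k = S i j k" . }
  ultimately show ?thesis by blast
qed


lemma mprod_char:
  assumes M: "M \<in> carrier_mat n3 n3" and inv: "invertible_mat M"
  shows "mprod M n1 n2 l C D \<in> tensors n1 l n3 \<and>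
     (\<forall>i<n1. \<forall>j<l. \<forall>k<n3. mhat M (mprod M n1 n2 l C D) i j k = (\<Sum>m<n2. mhat M C i m k * mhat M D m j k))"
proof -
  have dM: "dim_row M = n3" using M by auto
  have ex1: "\<exists>!E. E \<in> tensors n1 l n3 \<and> (\<forall>i<n1. \<forall>j<l. \<forall>k<n3. mhat M E i j k = (\<Sum>m<n2. mhat M C i m k * mhat M D m j k))"
  proof (rule ex_ex1I)
      show "\<exists>E. E \<in> tensors n1 l n3 \<and> (\<forall>i<n1. \<forall>j<l. \<forall>k<n3. mhat M E i j k = (\<Sum>m<n2. mhat M C i m k * mhat M D m j k))"
        using tensor_surj[OF M inv, of n1 l "\<lambda>i j k. (\<Sum>m<n2. mhat M C i m k * mhat M D m j k)"] by blast
    next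
      fix E F assume "E \<in> tensors n1 l n3 \<and> (\<forall>i<n1. \<forall>j<l. \<forall>k<n3. mhat M E i j k = (\<Sum>m<n2. mhat M C i m k * mhat M D m j k))"
        "F \<in> tensors n1 l n3 \<and> (\<forall>i<n1. \<forall>j<l. \<forall>k<n3. mhat M F i j k = (\<Sum>m<n2. mhat M C i m k * mhat M D m j k))"
      thus "E = F" using tensor_inj[OF M inv, of E n1 l F] by auto
    qed
  show ?thesis unfolding mprod_def dM by (rule theI'[OF ex1])
qed

lemma ctrans_char:
  assumes M: "M \<in> carrier_mat n3 n3" and inv: "invertible_mat M"
  shows "ctrans M n1 n2 A \<in> tensors n2 n1 n3 \<and>
     (\<forall>i<n2. \<forall>j<n1. \<forall>k<n3. mhat M (ctrans M n1 n2 A) i j k = cnj (mhat M A j i k))"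
proof -
  have dM: "dim_row M = n3" using M by auto
  have ex1: "\<exists>!E. E \<in> tensors n2 n1 n3 \<and> (\<forall>i<n2. \<forall>j<n1. \<forall>k<n3. mhat M E i j k = cnj (mhat M A j i k))"
  proof (rule ex_ex1I)
      show "\<exists>E. E \<in> tensors n2 n1 n3 \<and> (\<forall>i<n2. \<forall>j<n1. \<forall>k<n3. mhat M E i j k = cnj (mhat M A j i k))"
        using tensor_surj[OF M inv, of n2 n1 "\<lambda>i j k. cnj (mhat M A j i k)"] by blast
    next
      fix E F assume "E \<in> tensors n2 n1 n3 \<and> (\<forall>i<n2. \<forall>j<n1. \<forall>k<n3. mhat M E i j k = cnj (mhat M A j i k))"
        "F \<in> tensors n2 n1 n3 \<and> (\<forall>i<n2. \<forall>j<n1. \<forall>k<n3. mhat M F i j k = cnj (mhat M A j i k))"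
      thus "E = F" using tensor_inj[OF M inv, of E n2 n1 F] by auto
    qed
  show ?thesis unfolding ctrans_def dM by (rule theI'[OF ex1])
qed

definition slice :: "complex mat \<Rightarrow> nat \<Rightarrow> nat \<Rightarrow> tensor \<Rightarrow> nat \<Rightarrow> complex mat" where
  "slice M a b T k = mat a b (\<lambda>(i,j). mhat M T i j k)"

lemma slice_carrier: "slice M a b T k \<in> carrier_mat a b"
  by (simp add: slice_def)

lemma slice_mprod:
  assumes M: "M \<in> carrier_mat n3 n3" and inv: "invertible_mat M" and k: "k < n3"
  shows "slice M n1 l (mprod M n1 n2 l C D) k = slice M n1 n2 C k * slice M n2 l D k"
  using mprod_char[OF M inv, of n1 n2 l C D] k
  by (intro eq_matI) (auto simp: slice_def scalar_prod_def lessThan_atLeast0)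

lemma slice_ctrans:
  assumes M: "M \<in> carrier_mat n3 n3" and inv: "invertible_mat M" and k: "k < n3"
  shows "slice M n2 n1 (ctrans M n1 n2 A) k = adj (slice M n1 n2 A k)"
  using ctrans_char[OF M inv, of n1 n2 A] k
  by (intro eq_matI) (auto simp: slice_def)

lemma tensor_eq_iff:
  assumes M: "M \<in> carrier_mat n3 n3" and inv: "invertible_mat M"
    and E: "E \<in> tensors a b n3" and F: "F \<in> tensors a b n3"
  shows "E = F \<longleftrightarrow> (\<forall>k<n3. slice M a b E k = slice M a b F k)"
proof
  assume h: "\<forall>k<n3. slice M a b E k = slice M a b F k"
  show "E = F"
  proof (rule tensor_inj[OF M inv E F])
    fix i j k assume "i < a" "j < b" "k < n3"
    hence "slice M a b E k $$ (i,j) = slice M a b F k $$ (i,j)" using h by simp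
    thus "mhat M E i j k = mhat M F i j k" using \<open>i < a\<close> \<open>j < b\<close> by (simp add: slice_def)
  qed
qed simp

lemma slice_surj:
  assumes M: "M \<in> carrier_mat n3 n3" and inv: "invertible_mat M"
    and S: "\<And>k. k < n3 \<Longrightarrow> S k \<in> carrier_mat a b"
  shows "\<exists>E \<in> tensors a b n3. \<forall>k<n3. slice M a b E k = S k"
proof -
  obtain E where E: "E \<in> tensors a b n3" and h: "\<forall>i<a. \<forall>j<b. \<forall>k<n3. mhat M E i j k = S k $$ (i,j)"
    using tensor_surj[OF M inv, of a b "\<lambda>i j k. S k $$ (i,j)"] by blast
  have "\<forall>k<n3. slice M a b E k = S k"
  proof (intro allI impI)
    fix k assume k: "k < n3"
    show "slice M a b E k = S k" using S[OF k] h k by (intro eq_matI) (auto simp: slice_def)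
  qed
  thus ?thesis using E by blast
qed


lemma mprod_in:
  assumes M: "M \<in> carrier_mat n3 n3" and inv: "invertible_mat M"
  shows "mprod M n1 n2 l C D \<in> tensors n1 l n3"
  using mprod_char[OF M inv] by blast

lemma ctrans_in:
  assumes M: "M \<in> carrier_mat n3 n3" and inv: "invertible_mat M"
  shows "ctrans M n1 n2 A \<in> tensors n2 n1 n3"
  using ctrans_char[OF M inv] by blast

lemma mp_pred_iff:
  assumes M: "M \<in> carrier_mat n3 n3" and inv: "invertible_mat M"
    and A: "A \<in> tensors n1 n2 n3" and W: "W \<in> tensors n2 n1 n3"
  shows "(mprod M n1 n1 n2 (mprod M n1 n2 n1 A W) A = A \<and>
     mprod M n2 n2 n1 (mprod M n2 n1 n2 W A) W = W \<and>
     ctrans M n1 n1 (mprod M n1 n2 n1 A W) = mprod M n1 n2 n1 A W \<and>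
     ctrans M n2 n2 (mprod M n2 n1 n2 W A) = mprod M n2 n1 n2 W A)
   \<longleftrightarrow> (\<forall>k<n3. is_mp (slice M n1 n2 A k) (slice M n2 n1 W k))"
proof -
  note sm = slice_mprod[OF M inv] and sc = slice_ctrans[OF M inv]
  note te = tensor_eq_iff[OF M inv]
  note mi = mprod_in[OF M inv] and ci = ctrans_in[OF M inv]
  have 1: "mprod M n1 n1 n2 (mprod M n1 n2 n1 A W) A = A \<longleftrightarrow>
    (\<forall>k<n3. slice M n1 n2 A k * slice M n2 n1 W k * slice M n1 n2 A k = slice M n1 n2 A k)"
  proof -
    have "\<And>k. k < n3 \<Longrightarrow> slice M n1 n2 (mprod M n1 n1 n2 (mprod M n1 n2 n1 A W) A) k = slice M n1 n2 A k * slice M n2 n1 W k * slice M n1 n2 A k"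
      by (simp only: sm)
    thus ?thesis using te[OF mi A] by auto
  qed
  have 2: "mprod M n2 n2 n1 (mprod M n2 n1 n2 W A) W = W \<longleftrightarrow>
    (\<forall>k<n3. slice M n2 n1 W k * slice M n1 n2 A k * slice M n2 n1 W k = slice M n2 n1 W k)"
  proof -
    have "\<And>k. k < n3 \<Longrightarrow> slice M n2 n1 (mprod M n2 n2 n1 (mprod M n2 n1 n2 W A) W) k = slice M n2 n1 W k * slice M n1 n2 A k * slice M n2 n1 W k"
      by (simp only: sm)
    thus ?thesis using te[OF mi W] by auto
  qed
  have 3: "ctrans M n1 n1 (mprod M n1 n2 n1 A W) = mprod M n1 n2 n1 A W \<longleftrightarrow>
    (\<forall>k<n3. adj (slice M n1 n2 A k * slice M n2 n1 W k) = slice M n1 n2 A k * slice M n2 n1 W k)"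
  proof -
    have "\<And>k. k < n3 \<Longrightarrow> slice M n1 n1 (ctrans M n1 n1 (mprod M n1 n2 n1 A W)) k = adj (slice M n1 n2 A k * slice M n2 n1 W k)"
      by (simp only: sm sc)
    moreover have "\<And>k. k < n3 \<Longrightarrow> slice M n1 n1 (mprod M n1 n2 n1 A W) k = slice M n1 n2 A k * slice M n2 n1 W k"
      by (simp only: sm)
    ultimately show ?thesis using te[OF ci mi] by auto
  qed
  have 4: "ctrans M n2 n2 (mprod M n2 n1 n2 W A) = mprod M n2 n1 n2 W A \<longleftrightarrow>
    (\<forall>k<n3. adj (slice M n2 n1 W k * slice M n1 n2 A k) = slice M n2 n1 W k * slice M n1 n2 A k)"
  proof -
    have "\<And>k. k < n3 \<Longrightarrow> slice M n2 n2 (ctrans M n2 n2 (mprod M n2 n1 n2 W A)) k = adj (slice M n2 n1 W k * slice M n1 n2 A k)"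
      by (simp only: sm sc)
    moreover have "\<And>k. k < n3 \<Longrightarrow> slice M n2 n2 (mprod M n2 n1 n2 W A) k = slice M n2 n1 W k * slice M n1 n2 A k"
      by (simp only: sm)
    ultimately show ?thesis using te[OF ci mi] by auto
  qed
  show ?thesis unfolding 1 2 3 4 is_mp_def by auto
qed

lemma mpinv_char:
  assumes M: "M \<in> carrier_mat n3 n3" and inv: "invertible_mat M"
    and A: "A \<in> tensors n1 n2 n3"
  shows "mpinv M n1 n2 A \<in> tensors n2 n1 n3 \<and>
    (\<forall>k<n3. is_mp (slice M n1 n2 A k) (slice M n2 n1 (mpinv M n1 n2 A) k))"
proof -
  have dM: "dim_row M = n3" using M by auto
  let ?P = "\<lambda>W. W \<in> tensors n2 n1 n3 \<and> (\<forall>k<n3. is_mp (slice M n1 n2 A k) (slice M n2 n1 W k))"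
  have ex1: "\<exists>!W. ?P W"
  proof (rule ex_ex1I)
    define S where "S k = (SOME W. W \<in> carrier_mat n2 n1 \<and> is_mp (slice M n1 n2 A k) W)" for k
    have S: "S k \<in> carrier_mat n2 n1 \<and> is_mp (slice M n1 n2 A k) (S k)" for k
    proof -
      have "\<exists>W. W \<in> carrier_mat n2 n1 \<and> is_mp (slice M n1 n2 A k) W"
        using mp_exists[OF slice_carrier[of M n1 n2 A k]] by blast
      thus ?thesis unfolding S_def by (rule someI_ex)
    qed
    obtain W where W: "W \<in> tensors n2 n1 n3" "\<forall>k<n3. slice M n2 n1 W k = S k"
      using slice_surj[OF M inv, of S n2 n1, OF conjunct1[OF S]] by blast
    show "\<exists>W. ?P W" using W S by (intro exI[of _ W]) simp
  next
    fix W V assume a: "?P W" and b: "?P V"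
    have "\<forall>k<n3. slice M n2 n1 W k = slice M n2 n1 V k"
      using a b mp_unique[OF slice_carrier slice_carrier slice_carrier] by blast
    thus "W = V" using tensor_eq_iff[OF M inv, of W n2 n1 V] a b by blast
  qed
  have eq: "(\<lambda>W. W \<in> tensors n2 n1 (dim_row M) \<and>
     mprod M n1 n1 n2 (mprod M n1 n2 n1 A W) A = A \<and>
     mprod M n2 n2 n1 (mprod M n2 n1 n2 W A) W = W \<and>
     ctrans M n1 n1 (mprod M n1 n2 n1 A W) = mprod M n1 n2 n1 A W \<and>
     ctrans M n2 n2 (mprod M n2 n1 n2 W A) = mprod M n2 n1 n2 W A) = ?P"
  proof (rule ext)
    fix W
    show "(W \<in> tensors n2 n1 (dim_row M) \<and>
     mprod M n1 n1 n2 (mprod M n1 n2 n1 A W) A = A \<and>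
     mprod M n2 n2 n1 (mprod M n2 n1 n2 W A) W = W \<and>
     ctrans M n1 n1 (mprod M n1 n2 n1 A W) = mprod M n1 n2 n1 A W \<and>
     ctrans M n2 n2 (mprod M n2 n1 n2 W A) = mprod M n2 n1 n2 W A) = ?P W"
    proof (cases "W \<in> tensors n2 n1 n3")
      case True
      have "(mprod M n1 n1 n2 (mprod M n1 n2 n1 A W) A = A \<and>
         mprod M n2 n2 n1 (mprod M n2 n1 n2 W A) W = W \<and>
         ctrans M n1 n1 (mprod M n1 n2 n1 A W) = mprod M n1 n2 n1 A W \<and>
         ctrans M n2 n2 (mprod M n2 n1 n2 W A) = mprod M n2 n1 n2 W A) = (\<forall>k<n3. is_mp (slice M n1 n2 A k) (slice M n2 n1 W k))"
        by (rule mp_pred_iff[OF M inv A True])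
      thus ?thesis using True dM by simp
    qed (simp add: dM)
  qed
  show ?thesis unfolding mpinv_def eq by (rule theI'[OF ex1])
qed


lemma sat_iff:
  assumes M: "M \<in> carrier_mat n3 n3" and inv: "invertible_mat M"
    and X: "X \<in> tensors n2 n1 n3"
  shows "(mprod M n2 n2 n1 (mprod M n2 n1 n2 X P) X = X \<and>
          mprod M n1 n2 n1 A X = mprod M n1 n2 n1 A (ctrans M n1 n2 A) \<and>
          mprod M n2 n1 n2 X P = mprod M n2 n1 n2 Am A) \<longleftrightarrow>
    (\<forall>k<n3. slice M n2 n1 X k * slice M n1 n2 P k * slice M n2 n1 X k = slice M n2 n1 X k \<and>
       slice M n1 n2 A k * slice M n2 n1 X k = slice M n1 n2 A k * adj (slice M n1 n2 A k) \<and>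
       slice M n2 n1 X k * slice M n1 n2 P k = slice M n2 n1 Am k * slice M n1 n2 A k)"
proof -
  note sm = slice_mprod[OF M inv] and sc = slice_ctrans[OF M inv]
  note te = tensor_eq_iff[OF M inv]
  note mi = mprod_in[OF M inv]
  have 1: "mprod M n2 n2 n1 (mprod M n2 n1 n2 X P) X = X \<longleftrightarrow>
     (\<forall>k<n3. slice M n2 n1 X k * slice M n1 n2 P k * slice M n2 n1 X k = slice M n2 n1 X k)"
  proof -
    have "\<And>k. k < n3 \<Longrightarrow> slice M n2 n1 (mprod M n2 n2 n1 (mprod M n2 n1 n2 X P) X) k = slice M n2 n1 X k * slice M n1 n2 P k * slice M n2 n1 X k"
      by (simp only: sm)
    thus ?thesis using te[OF mi X] by auto
  qed
  have 2: "mprod M n1 n2 n1 A X = mprod M n1 n2 n1 A (ctrans M n1 n2 A) \<longleftrightarrow>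
     (\<forall>k<n3. slice M n1 n2 A k * slice M n2 n1 X k = slice M n1 n2 A k * adj (slice M n1 n2 A k))"
  proof -
    have "\<And>k. k < n3 \<Longrightarrow> slice M n1 n1 (mprod M n1 n2 n1 A X) k = slice M n1 n2 A k * slice M n2 n1 X k"
      by (simp only: sm)
    moreover have "\<And>k. k < n3 \<Longrightarrow> slice M n1 n1 (mprod M n1 n2 n1 A (ctrans M n1 n2 A)) k = slice M n1 n2 A k * adj (slice M n1 n2 A k)"
      by (simp only: sm sc)
    ultimately show ?thesis using te[OF mi mi] by auto
  qed
  have 3: "mprod M n2 n1 n2 X P = mprod M n2 n1 n2 Am A \<longleftrightarrow>
     (\<forall>k<n3. slice M n2 n1 X k * slice M n1 n2 P k = slice M n2 n1 Am k * slice M n1 n2 A k)"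
  proof -
    have "\<And>k. k < n3 \<Longrightarrow> slice M n2 n2 (mprod M n2 n1 n2 X P) k = slice M n2 n1 X k * slice M n1 n2 P k"
      by (simp only: sm)
    moreover have "\<And>k. k < n3 \<Longrightarrow> slice M n2 n2 (mprod M n2 n1 n2 Am A) k = slice M n2 n1 Am k * slice M n1 n2 A k"
      by (simp only: sm)
    ultimately show ?thesis using te[OF mi mi] by auto
  qed
  show ?thesis unfolding 1 2 3 by auto
qed

theorem theorem3p10:
  fixes M :: "complex mat" and n1 n2 n3 :: nat and A Am :: tensor
  assumes "M \<in> carrier_mat n3 n3" and "invertible_mat M"
    and "A \<in> tensors n1 n2 n3"
    and "Am \<in> inv1 M n1 n2 A"
  shows "let X0 = one_star M n1 n2 A Am;
             P = ctrans M n2 n1 (mpinv M n1 n2 A);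
             sat = (\<lambda>X. mprod M n2 n2 n1 (mprod M n2 n1 n2 X P) X = X \<and>
                        mprod M n1 n2 n1 A X = mprod M n1 n2 n1 A (ctrans M n1 n2 A) \<and>
                        mprod M n2 n1 n2 X P = mprod M n2 n1 n2 Am A)
         in X0 \<in> tensors n2 n1 n3 \<and> sat X0 \<and>
            (\<forall>X \<in> tensors n2 n1 n3. sat X \<longrightarrow> X = X0)"
proof -
  note M = assms(1) and inv = assms(2) and A = assms(3)
  have dM: "dim_row M = n3" using M by auto
  note sm = slice_mprod[OF M inv] and sc = slice_ctrans[OF M inv]
  note te = tensor_eq_iff[OF M inv]
  note mi = mprod_in[OF M inv]
  define sA where "sA k = slice M n1 n2 A k" for k
  define sG where "sG k = slice M n2 n1 Am k" for k
  define Wt where "Wt = mpinv M n1 n2 A"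
  define sW where "sW k = slice M n2 n1 Wt k" for k
  define X0 where "X0 = one_star M n1 n2 A Am"
  define P where "P = ctrans M n2 n1 Wt"
  have Am: "Am \<in> tensors n2 n1 n3" and amg: "mprod M n1 n1 n2 (mprod M n1 n2 n1 A Am) A = A"
    using assms(4) unfolding inv1_def dM by auto
  have g: "sA k * sG k * sA k = sA k" if k: "k < n3" for k
  proof -
    have "slice M n1 n2 (mprod M n1 n1 n2 (mprod M n1 n2 n1 A Am) A) k = sA k * sG k * sA k"
      using k unfolding sA_def sG_def by (simp only: sm)
    from this[unfolded amg] show ?thesis by (metis sA_def)
  qed
  have Wch: "Wt \<in> tensors n2 n1 n3 \<and> (\<forall>k<n3. is_mp (sA k) (sW k))"
    unfolding sA_def sW_def Wt_def using mpinv_char[OF M inv A] .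
  have sP: "slice M n1 n2 P k = adj (sW k)" if "k < n3" for k
    unfolding P_def sW_def using sc[OF that] .
  have X0in: "X0 \<in> tensors n2 n1 n3" unfolding X0_def one_star_def by (rule mi)
  have sX0: "slice M n2 n1 X0 k = sG k * sA k * adj (sA k)" if "k < n3" for k
    unfolding X0_def one_star_def sA_def sG_def using that by (simp only: sm sc)
  have carr: "sA k \<in> carrier_mat n1 n2" "sG k \<in> carrier_mat n2 n1" "sW k \<in> carrier_mat n2 n1" for k
    unfolding sA_def sG_def sW_def by (rule slice_carrier)+
  note mm = mat_main[OF carr(1) carr(2) g carr(3)]
  have satX0: "mprod M n2 n2 n1 (mprod M n2 n1 n2 X0 P) X0 = X0 \<and>
          mprod M n1 n2 n1 A X0 = mprod M n1 n2 n1 A (ctrans M n1 n2 A) \<and>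
          mprod M n2 n1 n2 X0 P = mprod M n2 n1 n2 Am A"
    unfolding sat_iff[OF M inv X0in]
  proof (intro allI impI conjI)
    fix k assume k: "k < n3"
    have mp: "is_mp (sA k) (sW k)" using Wch k by blast
    note mmk = mm[OF k mp]
    show "slice M n2 n1 X0 k * slice M n1 n2 P k * slice M n2 n1 X0 k = slice M n2 n1 X0 k"
      using mmk(1) by (simp add: sX0[OF k] sP[OF k])
    show "slice M n1 n2 A k * slice M n2 n1 X0 k = slice M n1 n2 A k * adj (slice M n1 n2 A k)"
      using mmk(2) by (simp add: sX0[OF k] sA_def)
    show "slice M n2 n1 X0 k * slice M n1 n2 P k = slice M n2 n1 Am k * slice M n1 n2 A k"
      using mmk(3) by (simp add: sX0[OF k] sP[OF k] sA_def sG_def)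
  qed
  have uniq: "X = X0" if X: "X \<in> tensors n2 n1 n3" and
    sX: "mprod M n2 n2 n1 (mprod M n2 n1 n2 X P) X = X \<and>
          mprod M n1 n2 n1 A X = mprod M n1 n2 n1 A (ctrans M n1 n2 A) \<and>
          mprod M n2 n1 n2 X P = mprod M n2 n1 n2 Am A" for X
  proof -
    have h: "\<forall>k<n3. slice M n2 n1 X k * slice M n1 n2 P k * slice M n2 n1 X k = slice M n2 n1 X k \<and>
       slice M n1 n2 A k * slice M n2 n1 X k = slice M n1 n2 A k * adj (slice M n1 n2 A k) \<and>
       slice M n2 n1 X k * slice M n1 n2 P k = slice M n2 n1 Am k * slice M n1 n2 A k"
      using sX unfolding sat_iff[OF M inv X] .
    have "\<forall>k<n3. slice M n2 n1 X k = slice M n2 n1 X0 k"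
    proof (intro allI impI)
      fix k assume k: "k < n3"
      have mp: "is_mp (sA k) (sW k)" using Wch k by blast
      note mmk = mm[OF k mp]
      have "slice M n2 n1 X k = sG k * sA k * adj (sA k)"
      proof (rule mmk(4)[OF slice_carrier])
        note hk = h[rule_format, OF k, unfolded sP[OF k], folded sA_def sG_def]
        show "slice M n2 n1 X k * adj (sW k) * slice M n2 n1 X k = slice M n2 n1 X k"
          using hk by blast
        show "sA k * slice M n2 n1 X k = sA k * adj (sA k)" using hk by blast
        show "slice M n2 n1 X k * adj (sW k) = sG k * sA k" using hk by blast
      qed
      thus "slice M n2 n1 X k = slice M n2 n1 X0 k" using sX0[OF k] by simp
    qed
    thus ?thesis using te[OF X X0in] by simp
  qed
  show ?thesis unfolding Let_def X0_def[symmetric] P_def[symmetric] Wt_def[symmetric]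
    using X0in satX0 uniq by blast
qed


end
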